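(* Let $T(z)=\dfrac{az+b}{cz+d}$ with $a,c\in\mathbb{C}\setminus\{0\}$, $b,d\in\mathbb{C}$ and $ad-bc=1$. Then $z=-b/a$ is a superattracting fixed point of $St_T$, the finite extraneous fixed points $z_e=\dfrac{(a-2d)\pm\sqrt{a^2-4}}{2c}$ are rationally indifferent fixed points of $St_T$, and $\infty$ is a superattracting fixed point of $St_T$.
   Context: For a non-constant rational function $f$, Stirling's iterative root-finding method is $St_f(z)=z-\dfrac{f(z)}{f'\big(z-f(z)\big)}$, regarded as a rational self-map of $\widehat{\mathbb{C}}$. An extraneous fixed point of $St_f$ is a fixed point which is not a zero of $f$. Superattracting means multiplier $0$; rationally indifferent means multiplier $e^{2\pi i\theta}$ with $\theta\in\mathbb{Q}$; the multiplier at $\infty$ of a rational map $F$ is $G'(0)$ with $G(z)=1/F(1/z)$. *)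

theory Defs
  imports "HOL-Complex_Analysis.Complex_Analysis"
begin

text \<open>As a rational self-map of the Riemann sphere, its
  removable singularities are filled in (remove_sings); at finite points this is
  exactly the rational map.\<close>

definition stirling_raw :: "(complex \<Rightarrow> complex) \<Rightarrow> complex \<Rightarrow> complex" where
  "stirling_raw f z = z - f z / deriv f (z - f z)"

definition stirling :: "(complex \<Rightarrow> complex) \<Rightarrow> complex \<Rightarrow> complex" where
  "stirling f = remove_sings (stirling_raw f)"

text \<open>Conjugate of a map F by w = 1/z: G(w) = 1/F(1/w), with the removable
  singularity at 0 filled in. The point infinity corresponds to w = 0.\<close>

definition conj_inf :: "(complex \<Rightarrow> complex) \<Rightarrow> complex \<Rightarrow> complex" where
  "conj_inf F = remove_sings (\<lambda>w. inverse (F (inverse w)))"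

definition fixed_point :: "(complex \<Rightarrow> complex) \<Rightarrow> complex \<Rightarrow> bool" where
  "fixed_point F z \<longleftrightarrow> F analytic_on {z} \<and> F z = z"

definition multiplier :: "(complex \<Rightarrow> complex) \<Rightarrow> complex \<Rightarrow> complex" where
  "multiplier F z = deriv F z"

definition superattracting_fixed_point :: "(complex \<Rightarrow> complex) \<Rightarrow> complex \<Rightarrow> bool" where
  "superattracting_fixed_point F z \<longleftrightarrow> fixed_point F z \<and> multiplier F z = 0"

definition rationally_indifferent_fixed_point :: "(complex \<Rightarrow> complex) \<Rightarrow> complex \<Rightarrow> bool" where
  "rationally_indifferent_fixed_point F z \<longleftrightarrow> fixed_point F z \<and>
     (\<exists>\<theta>::real. \<theta> \<in> \<rat> \<and> multiplier F z = exp (2 * of_real pi * \<i> * of_real \<theta>))"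

definition fixed_point_inf :: "(complex \<Rightarrow> complex) \<Rightarrow> bool" where
  "fixed_point_inf F \<longleftrightarrow> fixed_point (conj_inf F) 0"

definition multiplier_inf :: "(complex \<Rightarrow> complex) \<Rightarrow> complex" where
  "multiplier_inf F = multiplier (conj_inf F) 0"

definition superattracting_fixed_point_inf :: "(complex \<Rightarrow> complex) \<Rightarrow> bool" where
  "superattracting_fixed_point_inf F \<longleftrightarrow> fixed_point_inf F \<and> multiplier_inf F = 0"

end

theory Submission
  imports Defs
begin

lemma rs_agree:
  assumes S: "open S" and g: "g holomorphic_on S"
    and ev: "\<And>z. z \<in> S \<Longrightarrow> eventually (\<lambda>w. f w = g w) (at z)"
    and z: "z \<in> S"
  shows "remove_sings f z = g z"
proof (rule remove_sings_eqI)
  have "continuous_on S g" using g holomorphic_on_imp_continuous_on by blast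
  hence "isCont g z" using S z continuous_on_eq_continuous_at by blast
  hence "g \<midarrow>z\<rightarrow> g z" using isContD by blast
  moreover have "eventually (\<lambda>w. g w = f w) (at z)" using ev[OF z] by (simp add: eq_commute)
  ultimately show "f \<midarrow>z\<rightarrow> g z" using Lim_transform_eventually by blast
qed

lemma rs_props:
  assumes S: "open S" and g: "g holomorphic_on S"
    and ev: "\<And>z. z \<in> S \<Longrightarrow> eventually (\<lambda>w. f w = g w) (at z)"
    and z: "z \<in> S"
  shows "remove_sings f z = g z" "remove_sings f analytic_on {z}"
        "deriv (remove_sings f) z = deriv g z"
proof -
  have eq: "\<And>x. x \<in> S \<Longrightarrow> remove_sings f x = g x" using rs_agree[OF S g ev] by blast
  show "remove_sings f z = g z" using eq z by blast
  have "remove_sings f holomorphic_on S" using holomorphic_cong[of S S "remove_sings f" g] eq g by blast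
  hence "remove_sings f analytic_on S" using analytic_on_open S by blast
  thus "remove_sings f analytic_on {z}" using analytic_on_subset z by blast
  have "eventually (\<lambda>x. x \<in> S) (nhds z)" using S z eventually_nhds_in_open by blast
  hence "eventually (\<lambda>x. remove_sings f x = g x) (nhds z)"
    by (rule eventually_mono) (use eq in blast)
  thus "deriv (remove_sings f) z = deriv g z" by (rule deriv_cong_ev) simp
qed

lemma gen: fixes P Q E w :: complex assumes "Q \<noteq> 0" "w \<noteq> 0"
  shows "inverse w - P/Q * (E/(w*Q))^2 = (w*Q^3 - P*E^2)/(w^2*Q^3)"
  using assms by (simp add: field_simps power2_eq_square power3_eq_cube)
lemma gen2: fixes P Q c d w :: complex assumes "Q \<noteq> 0" "w \<noteq> 0"
  shows "c*(inverse w - P/Q) + d = (c*(Q - w*P) + d*(w*Q))/(w*Q)"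
  using assms by (simp add: field_simps)
lemma B: fixes a b c d w :: complex assumes cw: "c + d*w \<noteq> 0" and w: "w \<noteq> 0"
  shows "inverse w - (a * inverse w + b) / (c * inverse w + d) * (c * (inverse w - (a * inverse w + b) / (c * inverse w + d)) + d)^2
   = (w*(c + d*w)^3 - (a + b*w) * ((c + d*w)^2 - c*w*(a + b*w)) ^ 2) / (w^2 * (c + d*w)^3)"
proof -
  have f1: "a * inverse w + b = (a + b*w)/w" "c * inverse w + d = (c + d*w)/w" using w by (simp_all add: field_simps)
  have e1: "(a * inverse w + b) / (c * inverse w + d) = (a + b*w)/(c+d*w)" unfolding f1 using w cw by simp
  have e2: "c * (inverse w - (a + b*w)/(c+d*w)) + d = ((c + d*w)^2 - c*w*(a + b*w)) / (w*(c+d*w))"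
  proof -
    have "c * (inverse w - (a + b*w)/(c+d*w)) + d = (c * ((c+d*w) - w*(a + b*w)) + d*(w*(c+d*w))) / (w*(c+d*w))"
      using gen2[OF cw w] .
    then show ?thesis by (simp add: algebra_simps power2_eq_square)
  qed
  show ?thesis unfolding e1 e2 using gen[OF cw w] .
qed
lemma A: fixes a b c d s z :: complex assumes cn: "c \<noteq> 0" and det: "a*d - b*c = 1" and hs: "s^2 = a^2 - 4"
 shows "(c*z+d)^2 - c*(a*z+b) = c^2 * (z - ((a - 2*d) + s)/(2*c)) * (z - ((a - 2*d) - s)/(2*c))"
proof -
  have "c^2 * (z - ((a - 2*d) + s)/(2*c)) * (z - ((a - 2*d) - s)/(2*c))
        = c^2*z^2 - c*(a-2*d)*z + ((a-2*d)^2 - s^2)/4"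
    using cn by (simp add: field_simps power2_eq_square)
  also have "\<dots> = c^2*z^2 - c*(a-2*d)*z + (d^2 - a*d + 1)" unfolding hs by (simp add: field_simps power2_eq_square)
  also have "\<dots> = (c*z+d)^2 - c*(a*z+b)" using det by (simp add: algebra_simps power2_eq_square)
  finally show ?thesis by simp
qed

theorem mainTheorem13:
  fixes a b c d :: complex
  assumes "a \<noteq> 0" and "c \<noteq> 0" and "a * d - b * c = 1"
  defines "T \<equiv> (\<lambda>z. (a * z + b) / (c * z + d))"
  shows "superattracting_fixed_point (stirling T) (- b / a) \<and>
         (\<forall>s z. s\<^sup>2 = a\<^sup>2 - 4 \<and> z = ((a - 2 * d) + s) / (2 * c) \<longrightarrow>
            T z \<noteq> 0 \<and> rationally_indifferent_fixed_point (stirling T) z) \<and>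
         superattracting_fixed_point_inf (stirling T)"
proof -
  note a = assms(1) and cn = assms(2) and det = assms(3)
  define S where "S = {z. c * z + d \<noteq> 0}"
  define U where "U = (\<lambda>z. c * (z - T z) + d)"
  define R where "R = (\<lambda>z. z - T z * U z ^ 2)"
  define T' where "T' = (\<lambda>z::complex. 1 / (c * z + d) ^ 2)"
  have openS: "open S" unfolding S_def
    by (intro open_Collect_neq continuous_intros)
  have dT: "(T has_field_derivative T' z) (at z)" if "c * z + d \<noteq> 0" for z
  proof -
    have "(T has_field_derivative (a * (c*z+d) - (a*z+b) * c) / (c*z+d)^2) (at z)"
      unfolding T_def using that
      by (auto intro!: derivative_eq_intros simp: power2_eq_square)
    moreover have "(a * (c*z+d) - (a*z+b) * c) / (c*z+d)^2 = T' z"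
      unfolding T'_def using det by (simp add: algebra_simps)
    ultimately show ?thesis by simp
  qed
  have dU: "(U has_field_derivative c * (1 - T' z)) (at z)" if "c * z + d \<noteq> 0" for z
    unfolding U_def using dT[OF that]
    by (auto intro!: derivative_eq_intros)
  have dR: "(R has_field_derivative 1 - (T' z * U z ^ 2 + T z * (of_nat 2 * (c * (1 - T' z) * U z ^ (2 - Suc 0)))))
              (at z)" if "c * z + d \<noteq> 0" for z
    unfolding R_def
    by (rule DERIV_cong[OF DERIV_diff[OF DERIV_ident DERIV_mult[OF dT[OF that] DERIV_power[OF dU[OF that]]]]])
       (simp add: algebra_simps)
  have holR: "R holomorphic_on S"
  proof -
    have "\<forall>z\<in>S. R field_differentiable at z" using dR unfolding S_def field_differentiable_def by blast
    thus ?thesis unfolding holomorphic_on_def using field_differentiable_at_within by blast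
  qed
  define q where "q = (\<lambda>z. (c*z+d)^2 - c*(a*z+b))"
  have Uq: "U z * (c*z+d) = q z" if "c*z+d \<noteq> 0" for z
    unfolding U_def T_def q_def using that by (simp add: field_simps power2_eq_square)
  have qfac: "q z = c^2 * (z - ((a - 2*d) + s)/(2*c)) * (z - ((a - 2*d) - s)/(2*c))"
    if "s^2 = a^2 - 4" for s z
    unfolding q_def by (rule A[OF cn det that])
  define s0 where "s0 = csqrt (a^2 - 4)"
  have s0: "s0^2 = a^2 - 4" unfolding s0_def by simp
  define r1 where "r1 = ((a - 2*d) + s0)/(2*c)"
  define r2 where "r2 = ((a - 2*d) - s0)/(2*c)"
  have raw: "stirling_raw T z = R z" if "c*z+d \<noteq> 0" "z \<noteq> r1" "z \<noteq> r2" for z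
  proof -
    have "q z \<noteq> 0" using qfac[OF s0, of z] that cn unfolding r1_def r2_def by simp
    hence Unz: "U z \<noteq> 0" using Uq[OF that(1)] by auto
    have "c * (z - T z) + d \<noteq> 0" using Unz unfolding U_def .
    hence "deriv T (z - T z) = 1 / U z ^ 2"
      using DERIV_imp_deriv[OF dT] unfolding T'_def U_def by simp
    thus ?thesis unfolding stirling_raw_def R_def using Unz by simp
  qed
  have ev: "eventually (\<lambda>w. stirling_raw T w = R w) (at z)" if "z \<in> S" for z
  proof -
    have "eventually (\<lambda>w. w \<in> S) (at z)" using eventually_at_in_open'[OF openS that] .
    moreover have "eventually (\<lambda>w. w \<noteq> r1) (at z)" by (rule eventually_neq_at_within)
    moreover have "eventually (\<lambda>w. w \<noteq> r2) (at z)" by (rule eventually_neq_at_within)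
    ultimately show ?thesis by eventually_elim (use raw in \<open>auto simp: S_def\<close>)
  qed
  have P: "stirling T z = R z" "stirling T analytic_on {z}" "deriv (stirling T) z = deriv R z"
    if "z \<in> S" for z
    unfolding stirling_def using rs_props[OF openS holR _ that, of "stirling_raw T"] ev by blast+
  have derivR: "deriv R z = 1 - (T' z * U z ^ 2 + T z * (of_nat 2 * (c * (1 - T' z) * U z ^ (2 - Suc 0))))"
    if "c*z+d \<noteq> 0" for z
    using DERIV_imp_deriv[OF dR[OF that]] .
  have part1: "superattracting_fixed_point (stirling T) (- b / a)"
  proof -
    define z where "z = - b / a"
    have cz: "c*z+d = 1/a" unfolding z_def using a det by (simp add: field_simps)
    hence zS: "z \<in> S" unfolding S_def using a by simp
    have Tz: "T z = 0" unfolding T_def z_def using a by simp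
    have Uz: "U z = 1/a" unfolding U_def using Tz cz by simp
    have T'z: "T' z = a^2" unfolding T'_def cz by (simp add: power_one_over)
    have "R z = z" unfolding R_def using Tz by simp
    moreover have "deriv R z = 0" using derivR[of z] cz Tz Uz T'z a
      by (simp add: power2_eq_square)
    ultimately show ?thesis
      using P[OF zS] unfolding superattracting_fixed_point_def fixed_point_def multiplier_def z_def
      by simp
  qed
  have part2: "T z \<noteq> 0 \<and> rationally_indifferent_fixed_point (stirling T) z"
    if hs: "s\<^sup>2 = a\<^sup>2 - 4" and hz: "z = ((a - 2 * d) + s) / (2 * c)" for s z
  proof -
    have cz: "c*z+d = (a+s)/2" unfolding hz using cn by (simp add: field_simps)
    have "a + s \<noteq> 0"
    proof
      assume "a + s = 0" hence "s = -a" by (simp add: add_eq_0_iff)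
      with hs show False by simp
    qed
    hence czn: "c*z+d \<noteq> 0" unfolding cz by simp
    hence zS: "z \<in> S" unfolding S_def by simp
    have "q z = 0" using qfac[OF hs, of z] hz by simp
    hence Uz: "U z = 0" using Uq[OF czn] czn by simp
    have Tz: "T z \<noteq> 0"
    proof
      assume "T z = 0" hence "U z = c*z+d" unfolding U_def by simp
      with Uz czn show False by simp
    qed
    have "R z = z" unfolding R_def using Uz by simp
    moreover have "deriv R z = 1" using derivR[OF czn] Uz by simp
    moreover have "(1::complex) = exp (2 * of_real pi * \<i> * of_real (0::real))" by simp
    ultimately show ?thesis
      using P[OF zS] Tz unfolding rationally_indifferent_fixed_point_def fixed_point_def multiplier_def
      by (metis Rats_0)
  qed
  define E where "E = (\<lambda>w::complex. (c + d*w)^2 - c*w*(a + b*w))"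
  define D where "D = (\<lambda>w::complex. w*(c + d*w)^3 - (a + b*w) * E w ^ 2)"
  define H where "H = (\<lambda>w::complex. w^2 * (c + d*w)^3 / D w)"
  define S2 where "S2 = {w. c + d*w \<noteq> 0} \<inter> {w. D w \<noteq> 0}"
  have openS2: "open S2" unfolding S2_def D_def E_def
    by (intro open_Int open_Collect_neq continuous_intros)
  have D0: "D 0 = - a * c^4" unfolding D_def E_def by (simp add: power2_eq_square eval_nat_numeral)
  have S20: "0 \<in> S2" unfolding S2_def using D0 a cn by simp
  have holH: "H holomorphic_on S2" unfolding H_def S2_def D_def E_def
    by (intro holomorphic_intros) auto
  have Hw: "inverse (stirling T (inverse w)) = H w" if "w \<in> S2" "w \<noteq> 0" for w
  proof -
    have cw: "c + d*w \<noteq> 0" "D w \<noteq> 0" using that(1) unfolding S2_def by auto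
    have ciw: "c * inverse w + d \<noteq> 0" using cw(1) that(2)
      by (simp add: field_simps)
    hence "inverse w \<in> S" unfolding S_def by simp
    hence "stirling T (inverse w) = R (inverse w)" using P(1) by blast
    also have "R (inverse w) = D w / (w^2 * (c + d*w)^3)"
      unfolding R_def U_def T_def D_def E_def by (rule B[OF cw(1) that(2)])
    finally show ?thesis unfolding H_def using cw that(2) by simp
  qed
  have ev2: "eventually (\<lambda>w. inverse (stirling T (inverse w)) = H w) (at z)" if "z \<in> S2" for z
  proof -
    have "eventually (\<lambda>w. w \<in> S2) (at z)" using eventually_at_in_open'[OF openS2 that] .
    moreover have "eventually (\<lambda>w. w \<noteq> 0) (at z)" by (rule eventually_neq_at_within)
    ultimately show ?thesis by eventually_elim (use Hw in auto)
  qed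
  have P2: "conj_inf (stirling T) 0 = H 0" "conj_inf (stirling T) analytic_on {0}"
     "deriv (conj_inf (stirling T)) 0 = deriv H 0"
    unfolding conj_inf_def using rs_props[OF openS2 holH _ S20, of "\<lambda>w. inverse (stirling T (inverse w))"] ev2 by blast+
  have "(H has_field_derivative 0) (at 0)"
    unfolding H_def using D0 a cn
    by (auto intro!: derivative_eq_intros simp: D_def E_def)
  hence "deriv H 0 = 0" by (rule DERIV_imp_deriv)
  moreover have "H 0 = 0" unfolding H_def by simp
  ultimately have part3: "superattracting_fixed_point_inf (stirling T)"
    using P2 unfolding superattracting_fixed_point_inf_def fixed_point_inf_def multiplier_inf_def
      fixed_point_def multiplier_def by simp
  show ?thesis using part1 part2 part3 by blast
qed

end
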